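(* Let $\varepsilon$ be a random variable with distribution $p$ on a measurable space $\mathcal{E}$, let $f:\mathcal{E}\times\mathbb{R}^d\to\mathbb{R}$, and let $F(\theta)=\mathbb{E}_{\varepsilon\sim p}[f(\varepsilon,\theta)]$ with minimizer $\theta^*$; assume all expectations below are finite and gradient and expectation may be interchanged. Let $c:\mathcal{E}\times\mathbb{R}^d\to\mathbb{R}^d$ be a control variate with $\mathbb{E}_{\varepsilon}[c(\varepsilon,\theta)]=0$ for every $\theta$. Assume, for constants $L,H,M>0$: (A1) for every $\varepsilon$, $\theta\mapsto f(\varepsilon,\theta)$ is differentiable and $L$-smooth: $\|\nabla_\theta f(\varepsilon,\theta)-\nabla_\theta f(\varepsilon,\theta')\|_2\le L\|\theta-\theta'\|_2$; (A2) for every $\varepsilon$, $\theta\mapsto f(\varepsilon,\theta)$ is $H$-strongly convex; (A3) for every $\theta$, $\mathbb{E}_{\varepsilon}\big[\|\nabla_\theta f(\varepsilon,\theta^* )-c(\varepsilon,\theta)\|_2^2\big]\le M\,\mathbb{E}_{\varepsilon}\big[f(\varepsilon,\theta)-f(\varepsilon,\theta^* )\big]$. Fix $\theta_0\in\mathbb{R}^d$, let $\varepsilon_0,\varepsilon_1,\dots$ be i.i.d. with law $p$, and define for $t\ge1$ $$\theta_t=\theta_{t-1}-\eta\big(\nabla_\theta f(\varepsilon_{t-1},\theta_{t-1})-c(\varepsilon_{t-1},\theta_{t-1})\big).$$ If $0<\eta\le \frac{1}{2L+M}$ and $\rho=1-\eta H\big(1-\eta(2L+M)\big)$, then for all $t\ge0$,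 $$\mathbb{E}\big[\|\theta_t-\theta^*\|_2^2\big]\le \rho^{\,t}\,\|\theta_0-\theta^*\|_2^2 .$$
   Context: $\nabla_\theta$ is the gradient in the parameter $\theta$. The update is a stochastic (reparameterization-type) gradient step in which the stochastic gradient is corrected by a zero-mean control variate $c$. *)

theory Defs
  imports "HOL-Probability.Probability"
begin

definition strongly_convex_on :: "'a::real_inner set \<Rightarrow> real \<Rightarrow> ('a \<Rightarrow> real) \<Rightarrow> bool" where
  "strongly_convex_on S H g \<longleftrightarrow> convex_on S (\<lambda>x. g x - (H / 2) * (norm x)\<^sup>2)"

primrec sgd_cv_iter ::
  "('e \<Rightarrow> 'a \<Rightarrow> 'a::real_vector) \<Rightarrow> ('e \<Rightarrow> 'a \<Rightarrow> 'a) \<Rightarrow> real \<Rightarrow> 'a \<Rightarrow> (nat \<Rightarrow> 'w \<Rightarrow> 'e)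
    \<Rightarrow> nat \<Rightarrow> 'w \<Rightarrow> 'a" where
  "sgd_cv_iter gf c \<eta> \<theta>0 eps 0 \<omega> = \<theta>0"
| "sgd_cv_iter gf c \<eta> \<theta>0 eps (Suc t) \<omega> =
     (let \<theta> = sgd_cv_iter gf c \<eta> \<theta>0 eps t \<omega>
      in \<theta> - \<eta> *\<^sub>R (gf (eps t \<omega>) \<theta> - c (eps t \<omega>) \<theta>))"

end

theory Submission imports Defs begin


lemma line_deriv:
  fixes g :: "'a::real_inner \<Rightarrow> real"
  assumes deriv: "\<And>x. (g has_derivative (\<lambda>h. gg x \<bullet> h)) (at x)"
  shows "((\<lambda>s. g (x + s *\<^sub>R d)) has_real_derivative (gg (x + s *\<^sub>R d) \<bullet> d)) (at s)"
proof -
  have "((\<lambda>s. x + s *\<^sub>R d) has_derivative (\<lambda>h. h *\<^sub>R d)) (at s)"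
    by (auto intro!: derivative_eq_intros)
  from has_derivative_compose[OF this deriv]
  have "((\<lambda>s. g (x + s *\<^sub>R d)) has_derivative (\<lambda>h. gg (x + s *\<^sub>R d) \<bullet> (h *\<^sub>R d))) (at s)" .
  moreover have "(\<lambda>h. gg (x + s *\<^sub>R d) \<bullet> (h *\<^sub>R d)) = (*) (gg (x + s *\<^sub>R d) \<bullet> d)"
    by (auto simp: fun_eq_iff)
  ultimately show ?thesis by (simp add: has_field_derivative_def)
qed

lemma descent:
  fixes g :: "'a::real_inner \<Rightarrow> real"
  assumes deriv: "\<And>x. (g has_derivative (\<lambda>h. gg x \<bullet> h)) (at x)"
    and lip: "\<And>x y. norm (gg x - gg y) \<le> L * norm (x - y)"
  shows "g y \<le> g x + gg x \<bullet> (y - x) + L / 2 * (norm (y - x))\<^sup>2"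
proof -
  define d where "d = y - x"
  define \<psi> where "\<psi> s = g (x + s *\<^sub>R d) - s * (gg x \<bullet> d) - L / 2 * s\<^sup>2 * (norm d)\<^sup>2" for s
  have "\<psi> 1 \<le> \<psi> 0"
  proof (rule DERIV_nonpos_imp_nonincreasing[of 0 1])
    fix s :: real assume s: "0 \<le> s" "s \<le> 1"
    have D: "(\<psi> has_real_derivative (gg (x + s *\<^sub>R d) \<bullet> d - gg x \<bullet> d - L * s * (norm d)\<^sup>2)) (at s)"
      unfolding \<psi>_def
      by (rule derivative_eq_intros line_deriv[OF deriv] refl | simp)+
    have "gg (x + s *\<^sub>R d) \<bullet> d - gg x \<bullet> d = (gg (x + s *\<^sub>R d) - gg x) \<bullet> d"
      by (simp add: inner_diff_left)
    also have "\<dots> \<le> norm (gg (x + s *\<^sub>R d) - gg x) * norm d"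
      by (rule Cauchy_Schwarz_ineq2[THEN order_trans[OF abs_ge_self]])
    also have "\<dots> \<le> (L * norm (s *\<^sub>R d)) * norm d"
      using lip[of "x + s *\<^sub>R d" x] by (intro mult_right_mono) auto
    also have "\<dots> = L * s * (norm d)\<^sup>2" using s by (simp add: power2_eq_square)
    finally show "\<exists>y. (\<psi> has_real_derivative y) (at s) \<and> y \<le> 0"
      using D by (intro exI[of _ "gg (x + s *\<^sub>R d) \<bullet> d - gg x \<bullet> d - L * s * (norm d)\<^sup>2"]) auto
  qed simp
  then show ?thesis by (simp add: \<psi>_def d_def algebra_simps)
qed


lemma sc_first_order:
  fixes g :: "'a::real_inner \<Rightarrow> real"
  assumes deriv: "\<And>x. (g has_derivative (\<lambda>h. gg x \<bullet> h)) (at x)"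
    and sc: "strongly_convex_on UNIV H g"
  shows "g x + gg x \<bullet> (z - x) + H / 2 * (norm (z - x))\<^sup>2 \<le> g z"
proof -
  define d where "d = z - x"
  define q where "q y = g y - H / 2 * (norm y)\<^sup>2" for y
  have cq: "convex_on UNIV q" using sc unfolding strongly_convex_on_def q_def .
  define \<phi> where "\<phi> s = q (x + s *\<^sub>R d)" for s
  have c\<phi>: "convex_on UNIV \<phi>"
  proof (rule convex_onI)
    fix t s1 s2 :: real assume t: "0 < t" "t < 1"
    have "x + ((1 - t) * s1 + t * s2) *\<^sub>R d = (1 - t) *\<^sub>R (x + s1 *\<^sub>R d) + t *\<^sub>R (x + s2 *\<^sub>R d)"
      by (simp add: algebra_simps)
    then show "\<phi> ((1 - t) *\<^sub>R s1 + t *\<^sub>R s2) \<le> (1 - t) * \<phi> s1 + t * \<phi> s2"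
      unfolding \<phi>_def using convex_onD[OF cq, of t] t by simp
  qed simp
  have phi_eq: "\<phi> s = g (x + s *\<^sub>R d) - H / 2 * ((norm x)\<^sup>2 + 2 * s * (x \<bullet> d) + s\<^sup>2 * (norm d)\<^sup>2)" for s
  proof -
    have "(norm (x + s *\<^sub>R d))\<^sup>2 = (x + s *\<^sub>R d) \<bullet> (x + s *\<^sub>R d)" by (rule power2_norm_eq_inner)
    also have "\<dots> = x \<bullet> x + 2 * s * (x \<bullet> d) + s * s * (d \<bullet> d)"
      by (simp add: inner_add_left inner_add_right inner_commute algebra_simps)
    finally show ?thesis by (simp add: \<phi>_def q_def dot_square_norm power2_eq_square)
  qed
  have D: "(\<phi> has_real_derivative (gg (x + 0 *\<^sub>R d) \<bullet> d - H / 2 * (2 * (x \<bullet> d) + 2 * 0 * (norm d)\<^sup>2))) (at 0)"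
    unfolding phi_eq[abs_def]
    by (rule derivative_eq_intros line_deriv[OF deriv] refl | simp)+
  have "(gg x \<bullet> d - H * (x \<bullet> d)) * (1 - 0) \<le> \<phi> 1 - \<phi> 0"
    by (rule convex_on_imp_above_tangent[OF c\<phi>]) (use D in auto)
  then show ?thesis
    by (simp add: phi_eq d_def power2_norm_eq_inner inner_diff_left inner_diff_right algebra_simps)
qed

lemma cocoercive:
  fixes g :: "'a::real_inner \<Rightarrow> real"
  assumes deriv: "\<And>x. (g has_derivative (\<lambda>h. gg x \<bullet> h)) (at x)"
    and lip: "\<And>x y. norm (gg x - gg y) \<le> L * norm (x - y)"
    and fo: "\<And>x z. g x + gg x \<bullet> (z - x) \<le> g z"
    and L: "L > 0"
  shows "(norm (gg x - gg y))\<^sup>2 \<le> 2 * L * (g x - g y - gg y \<bullet> (x - y))"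
proof -
  define v where "v = gg x - gg y"
  define w where "w = x - (1 / L) *\<^sub>R v"
  have "g y + gg y \<bullet> (w - y) \<le> g w" by (rule fo)
  moreover have "g w \<le> g x + gg x \<bullet> (w - x) + L / 2 * (norm (w - x))\<^sup>2" by (rule descent[OF deriv lip])
  ultimately have "g y + gg y \<bullet> (w - y) \<le> g x + gg x \<bullet> (w - x) + L / 2 * (norm (w - x))\<^sup>2" by linarith
  moreover have "gg x \<bullet> (w - x) - gg y \<bullet> (w - y) = - (1/L) * (norm v)\<^sup>2 - gg y \<bullet> (x - y)"
    by (simp add: w_def v_def inner_diff_left inner_diff_right power2_norm_eq_inner algebra_simps)
  moreover have "L / 2 * (norm (w - x))\<^sup>2 = L / 2 * ((1/L)\<^sup>2 * (norm v)\<^sup>2)"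
    using L by (simp add: w_def power_divide)
  ultimately have "(1/L) * (norm v)\<^sup>2 - L / 2 * ((1/L)\<^sup>2 * (norm v)\<^sup>2) \<le> g x - g y - gg y \<bullet> (x - y)"
    by linarith
  moreover have "(1/L) * (norm v)\<^sup>2 - L / 2 * ((1/L)\<^sup>2 * (norm v)\<^sup>2) = (norm v)\<^sup>2 / (2 * L)"
    using L by (simp add: field_simps power2_eq_square)
  ultimately have "(norm v)\<^sup>2 / (2 * L) \<le> g x - g y - gg y \<bullet> (x - y)" by linarith
  then have "(norm v)\<^sup>2 \<le> (g x - g y - gg y \<bullet> (x - y)) * (2 * L)"
    using L by (simp add: pos_divide_le_eq)
  then show ?thesis by (simp add: v_def mult.commute)
qed


lemma sq_sum_le: "(norm (a + b :: 'a::real_normed_vector))\<^sup>2 \<le> 2 * (norm a)\<^sup>2 + 2 * (norm b)\<^sup>2"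
proof -
  have "norm (a + b) \<le> norm a + norm b" by (rule norm_triangle_ineq)
  then have "(norm (a + b))\<^sup>2 \<le> (norm a + norm b)\<^sup>2" by (simp add: power_mono)
  also have "\<dots> \<le> 2 * (norm a)\<^sup>2 + 2 * (norm b)\<^sup>2"
  proof -
    have "0 \<le> (norm a - norm b)\<^sup>2" by simp
    then show ?thesis by (simp add: power2_diff power2_sum)
  qed
  finally show ?thesis .
qed

lemma norm_sq_expand:
  fixes r v :: "'a::real_inner"
  shows "(norm (r - t *\<^sub>R v))\<^sup>2 = (norm r)\<^sup>2 - 2 * t * (v \<bullet> r) + t\<^sup>2 * (norm v)\<^sup>2"
proof -
  have "(norm (r - t *\<^sub>R v))\<^sup>2 = (r - t *\<^sub>R v) \<bullet> (r - t *\<^sub>R v)" by (rule power2_norm_eq_inner)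
  also have "\<dots> = r \<bullet> r - 2 * t * (v \<bullet> r) + t * t * (v \<bullet> v)"
    by (simp add: inner_diff_left inner_diff_right inner_commute algebra_simps)
  finally show ?thesis by (simp add: dot_square_norm power2_eq_square)
qed

lemma one_step:
  fixes P :: "'e measure" and f :: "'e \<Rightarrow> 'a::euclidean_space \<Rightarrow> real"
    and gf c :: "'e \<Rightarrow> 'a \<Rightarrow> 'a" and \<theta>star x :: 'a and L H M \<eta> :: real
  assumes P: "prob_space P"
    and grad: "\<And>e x. e \<in> space P \<Longrightarrow> ((f e) has_derivative (\<lambda>h. gf e x \<bullet> h)) (at x)"
    and f_int: "\<And>x. integrable P (\<lambda>e. f e x)"
    and gf_int: "\<And>x. integrable P (\<lambda>e. gf e x)"
    and c_int: "\<And>x. integrable P (\<lambda>e. c e x)"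
    and A3_int: "\<And>x. integrable P (\<lambda>e. (norm (gf e \<theta>star - c e x))\<^sup>2)"
    and c_zero_mean: "\<And>x. (\<integral>e. c e x \<partial>P) = 0"
    and gstar: "(\<integral>e. gf e \<theta>star \<partial>P) = 0"
    and minimizer: "\<And>x. (\<integral>e. f e \<theta>star \<partial>P) \<le> (\<integral>e. f e x \<partial>P)"
    and L_pos: "L > 0" and H_pos: "H > 0" and M_pos: "M > 0"
    and A1: "\<And>e x y. e \<in> space P \<Longrightarrow> norm (gf e x - gf e y) \<le> L * norm (x - y)"
    and A2: "\<And>e. e \<in> space P \<Longrightarrow> strongly_convex_on UNIV H (f e)"
    and A3: "\<And>x. (\<integral>e. (norm (gf e \<theta>star - c e x))\<^sup>2 \<partial>P)
                   \<le> M * (\<integral>e. (f e x - f e \<theta>star) \<partial>P)"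
    and \<eta>_pos: "0 < \<eta>" and \<eta>_le: "\<eta> \<le> 1 / (2 * L + M)"
  shows "integrable P (\<lambda>e. (norm (x - \<eta> *\<^sub>R (gf e x - c e x) - \<theta>star))\<^sup>2) \<and>
         (\<integral>e. (norm (x - \<eta> *\<^sub>R (gf e x - c e x) - \<theta>star))\<^sup>2 \<partial>P)
           \<le> (1 - \<eta> * H * (1 - \<eta> * (2 * L + M))) * (norm (x - \<theta>star))\<^sup>2"
proof -
  interpret prob_space P by (rule P)
  define r where "r = x - \<theta>star"
  define \<psi> where "\<psi> e = (norm (x - \<eta> *\<^sub>R (gf e x - c e x) - \<theta>star))\<^sup>2" for e
  define B where "B e = (norm r)\<^sup>2 - 2 * \<eta> * (gf e x \<bullet> r - c e x \<bullet> r)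
      + \<eta>\<^sup>2 * (4 * L * (f e x - f e \<theta>star - gf e \<theta>star \<bullet> r) + 2 * (norm (gf e \<theta>star - c e x))\<^sup>2)" for e
  have fo: "f e z + gf e z \<bullet> (w - z) + H / 2 * (norm (w - z))\<^sup>2 \<le> f e w" if "e \<in> space P" for e z w
    by (rule sc_first_order[OF grad[OF that] A2[OF that]])
  have pt: "\<psi> e \<le> B e" if e: "e \<in> space P" for e
  proof -
    have exp: "\<psi> e = (norm r)\<^sup>2 - 2 * \<eta> * ((gf e x - c e x) \<bullet> r) + \<eta>\<^sup>2 * (norm (gf e x - c e x))\<^sup>2"
    proof -
      have "x - \<eta> *\<^sub>R (gf e x - c e x) - \<theta>star = r - \<eta> *\<^sub>R (gf e x - c e x)" by (simp add: r_def)
      then show ?thesis unfolding \<psi>_def by (simp only: norm_sq_expand)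
    qed
    have "(norm (gf e x - c e x))\<^sup>2 \<le> 2 * (norm (gf e x - gf e \<theta>star))\<^sup>2 + 2 * (norm (gf e \<theta>star - c e x))\<^sup>2"
      using sq_sum_le[of "gf e x - gf e \<theta>star" "gf e \<theta>star - c e x"] by simp
    moreover have "(norm (gf e x - gf e \<theta>star))\<^sup>2 \<le> 2 * L * (f e x - f e \<theta>star - gf e \<theta>star \<bullet> (x - \<theta>star))"
    proof (rule cocoercive[OF grad[OF e] A1[OF e] _ L_pos])
      fix z w :: 'a
      have "0 \<le> H / 2 * (norm (w - z))\<^sup>2" using H_pos by simp
      then show "f e z + gf e z \<bullet> (w - z) \<le> f e w" using fo[OF e, of z w] by linarith
    qed
    ultimately have "(norm (gf e x - c e x))\<^sup>2 \<le> 4 * L * (f e x - f e \<theta>star - gf e \<theta>star \<bullet> r) + 2 * (norm (gf e \<theta>star - c e x))\<^sup>2"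
      by (simp add: r_def)
    then have "\<eta>\<^sup>2 * (norm (gf e x - c e x))\<^sup>2 \<le> \<eta>\<^sup>2 * (4 * L * (f e x - f e \<theta>star - gf e \<theta>star \<bullet> r) + 2 * (norm (gf e \<theta>star - c e x))\<^sup>2)"
      by (rule mult_left_mono) simp
    then show ?thesis unfolding exp B_def by (simp add: inner_diff_left)
  qed
  have meas_gf: "(\<lambda>e. gf e z) \<in> borel_measurable P" for z using gf_int borel_measurable_integrable by blast
  have meas_c: "(\<lambda>e. c e z) \<in> borel_measurable P" for z using c_int borel_measurable_integrable by blast
  have intB: "integrable P B"
    unfolding B_def using f_int gf_int c_int A3_int P
    by (intro Bochner_Integration.integrable_add Bochner_Integration.integrable_diff integrable_mult_right
        integrable_inner_left integrable_const) auto
  have int\<psi>: "integrable P \<psi>"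
  proof (rule Bochner_Integration.integrable_bound[OF intB])
    show "\<psi> \<in> borel_measurable P" unfolding \<psi>_def using meas_gf meas_c by measurable
    show "AE e in P. norm (\<psi> e) \<le> norm (B e)"
      using pt by (intro AE_I2) (simp add: \<psi>_def, smt (verit) \<psi>_def zero_le_power2)
  qed
  have "(\<integral>e. \<psi> e \<partial>P) \<le> (\<integral>e. B e \<partial>P)"
    using pt by (intro integral_mono int\<psi> intB) auto
  define D where "D = (\<integral>e. (f e x - f e \<theta>star) \<partial>P)"
  define G where "G = (\<integral>e. gf e x \<bullet> r \<partial>P)"
  define A where "A = (\<integral>e. (norm (gf e \<theta>star - c e x))\<^sup>2 \<partial>P)"
  have i1: "(\<integral>e. (gf e x \<bullet> r - c e x \<bullet> r) \<partial>P) = G"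
    unfolding G_def using gf_int c_int by (simp add: integral_diff c_zero_mean)
  have i2: "(\<integral>e. (f e x - f e \<theta>star - gf e \<theta>star \<bullet> r) \<partial>P) = D"
    unfolding D_def using gf_int f_int by (simp add: integral_diff gstar)
  have intB_eq: "(\<integral>e. B e \<partial>P) = (norm r)\<^sup>2 - 2 * \<eta> * G + \<eta>\<^sup>2 * (4 * L * D + 2 * A)"
    unfolding B_def A_def using f_int gf_int c_int A3_int
    by (simp add: integral_diff integral_add i1[symmetric] i2[symmetric] prob_space del: integral_inner_left)
  have Dnn: "0 \<le> D" unfolding D_def using minimizer[of x] f_int by (simp add: integral_diff)
  have AM: "A \<le> M * D" unfolding A_def D_def by (rule A3)
  have GD: "D + H / 2 * (norm r)\<^sup>2 \<le> G"
  proof -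
    have "(\<integral>e. (f e x - f e \<theta>star + H / 2 * (norm r)\<^sup>2) \<partial>P) \<le> G"
      unfolding G_def
    proof (rule integral_mono)
      show "integrable P (\<lambda>e. f e x - f e \<theta>star + H / 2 * (norm r)\<^sup>2)" using f_int by auto
      show "integrable P (\<lambda>e. gf e x \<bullet> r)" using gf_int by auto
      fix e assume e: "e \<in> space P"
      from fo[OF e, of x \<theta>star] show "f e x - f e \<theta>star + H / 2 * (norm r)\<^sup>2 \<le> gf e x \<bullet> r"
        by (simp add: r_def norm_minus_commute inner_diff_right)
    qed
    then show ?thesis unfolding D_def using f_int by (simp add: integral_diff prob_space)
  qed
  have e1: "\<eta> * (2 * L + M) \<le> 1" using \<eta>_le L_pos M_pos \<eta>_pos by (simp add: field_simps)
  have "\<eta>\<^sup>2 * (4 * L * D + 2 * A) \<le> \<eta>\<^sup>2 * (4 * L * D + 2 * (M * D))"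
    using AM by (intro mult_left_mono) auto
  also have "\<dots> = 2 * \<eta> * ((\<eta> * (2 * L + M)) * D)" by (simp add: power2_eq_square algebra_simps)
  also have "\<dots> \<le> 2 * \<eta> * (1 * D)"
    using e1 Dnn \<eta>_pos by (intro mult_left_mono mult_right_mono) auto
  finally have t1: "\<eta>\<^sup>2 * (4 * L * D + 2 * A) \<le> 2 * \<eta> * D" by simp
  have t2: "2 * \<eta> * (D + H / 2 * (norm r)\<^sup>2) \<le> 2 * \<eta> * G"
    using GD \<eta>_pos by (intro mult_left_mono) auto
  have t3: "0 \<le> \<eta>\<^sup>2 * H * (2 * L + M) * (norm r)\<^sup>2" using H_pos L_pos M_pos by simp
  have "(\<integral>e. \<psi> e \<partial>P) \<le> (1 - \<eta> * H * (1 - \<eta> * (2 * L + M))) * (norm r)\<^sup>2"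
    using \<open>(\<integral>e. \<psi> e \<partial>P) \<le> (\<integral>e. B e \<partial>P)\<close> intB_eq t1 t2 t3
    by (simp add: algebra_simps power2_eq_square)
  then show ?thesis using int\<psi> unfolding \<psi>_def r_def by simp
qed


lemma iter_dep:
  "(\<And>i. i < t \<Longrightarrow> z i = eps i \<omega>) \<Longrightarrow>
   sgd_cv_iter gf c \<eta> \<theta>0 (\<lambda>i (_::unit). z i) t () = sgd_cv_iter gf c \<eta> \<theta>0 eps t \<omega>"
  by (induction t) (simp_all add: Let_def)

lemma iter_meas:
  fixes P :: "'e measure" and gf c :: "'e \<Rightarrow> 'a \<Rightarrow> 'a::euclidean_space"
  assumes gf_meas: "(\<lambda>(e, x). gf e x) \<in> borel_measurable (P \<Otimes>\<^sub>M borel)"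
    and c_meas: "(\<lambda>(e, x). c e x) \<in> borel_measurable (P \<Otimes>\<^sub>M borel)"
  shows "t \<le> n \<Longrightarrow> (\<lambda>z. sgd_cv_iter gf c \<eta> \<theta>0 (\<lambda>i (_::unit). z i) t ()) \<in> borel_measurable (PiM {..<n} (\<lambda>_. P))"
proof (induction t)
  case 0 then show ?case by simp
next
  case (Suc t)
  let ?G = "\<lambda>z. sgd_cv_iter gf c \<eta> \<theta>0 (\<lambda>i (_::unit). z i) t ()"
  have G: "?G \<in> borel_measurable (PiM {..<n} (\<lambda>_. P))" using Suc by simp
  have pr: "(\<lambda>z. (z t, ?G z)) \<in> measurable (PiM {..<n} (\<lambda>_. P)) (P \<Otimes>\<^sub>M borel)"
    using Suc.prems by (intro measurable_Pair G measurable_component_singleton) auto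
  have m1: "(\<lambda>z. gf (z t) (?G z)) \<in> borel_measurable (PiM {..<n} (\<lambda>_. P))"
    using measurable_compose[OF pr gf_meas] by simp
  have m2: "(\<lambda>z. c (z t) (?G z)) \<in> borel_measurable (PiM {..<n} (\<lambda>_. P))"
    using measurable_compose[OF pr c_meas] by simp
  show ?case using G m1 m2 by (simp add: Let_def) measurable
qed

theorem mainTheorem2:
  fixes P :: "'e measure" and \<Omega> :: "'w measure"
    and f :: "'e \<Rightarrow> 'a::euclidean_space \<Rightarrow> real"
    and gf :: "'e \<Rightarrow> 'a \<Rightarrow> 'a"
    and c :: "'e \<Rightarrow> 'a \<Rightarrow> 'a"
    and \<theta>star \<theta>0 :: 'a
    and eps :: "nat \<Rightarrow> 'w \<Rightarrow> 'e"
    and L H M \<eta> \<rho> :: real and t :: nat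
  assumes P: "prob_space P" and \<Omega>: "prob_space \<Omega>"
    and f_meas: "(\<lambda>(e, x). f e x) \<in> borel_measurable (P \<Otimes>\<^sub>M borel)"
    and gf_meas: "(\<lambda>(e, x). gf e x) \<in> borel_measurable (P \<Otimes>\<^sub>M borel)"
    and c_meas: "(\<lambda>(e, x). c e x) \<in> borel_measurable (P \<Otimes>\<^sub>M borel)"
    and grad: "\<And>e x. e \<in> space P \<Longrightarrow> ((f e) has_derivative (\<lambda>h. gf e x \<bullet> h)) (at x)"
    and f_int: "\<And>x. integrable P (\<lambda>e. f e x)"
    and gf_int: "\<And>x. integrable P (\<lambda>e. gf e x)"
    and c_int: "\<And>x. integrable P (\<lambda>e. c e x)"
    and A3_int: "\<And>x. integrable P (\<lambda>e. (norm (gf e \<theta>star - c e x))\<^sup>2)"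
    and interchange: "\<And>x. ((\<lambda>y. \<integral>e. f e y \<partial>P) has_derivative (\<lambda>h. (\<integral>e. gf e x \<partial>P) \<bullet> h)) (at x)"
    and minimizer: "\<And>x. (\<integral>e. f e \<theta>star \<partial>P) \<le> (\<integral>e. f e x \<partial>P)"
    and c_zero_mean: "\<And>x. (\<integral>e. c e x \<partial>P) = 0"
    and L_pos: "L > 0" and H_pos: "H > 0" and M_pos: "M > 0"
    and A1: "\<And>e x y. e \<in> space P \<Longrightarrow> norm (gf e x - gf e y) \<le> L * norm (x - y)"
    and A2: "\<And>e. e \<in> space P \<Longrightarrow> strongly_convex_on UNIV H (f e)"
    and A3: "\<And>x. (\<integral>e. (norm (gf e \<theta>star - c e x))\<^sup>2 \<partial>P)
                   \<le> M * (\<integral>e. (f e x - f e \<theta>star) \<partial>P)"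
    and eps_indep: "prob_space.indep_vars \<Omega> (\<lambda>_. P) eps UNIV"
    and eps_law: "\<And>i. distr \<Omega> P (eps i) = P"
    and iter_int: "\<And>s. integrable \<Omega> (\<lambda>\<omega>. (norm (sgd_cv_iter gf c \<eta> \<theta>0 eps s \<omega> - \<theta>star))\<^sup>2)"
    and \<eta>_pos: "0 < \<eta>" and \<eta>_le: "\<eta> \<le> 1 / (2 * L + M)"
    and \<rho>_def: "\<rho> = 1 - \<eta> * H * (1 - \<eta> * (2 * L + M))"
  shows "(\<integral>\<omega>. (norm (sgd_cv_iter gf c \<eta> \<theta>0 eps t \<omega> - \<theta>star))\<^sup>2 \<partial>\<Omega>)
           \<le> \<rho> ^ t * (norm (\<theta>0 - \<theta>star))\<^sup>2"
  proof -
  interpret \<Omega>: prob_space \<Omega> by (rule \<Omega>)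
  interpret P: prob_space P by (rule P)
  define X where "X t \<omega> = sgd_cv_iter gf c \<eta> \<theta>0 eps t \<omega>" for t \<omega>
  define I where "I t = (\<integral>\<omega>. (norm (X t \<omega> - \<theta>star))\<^sup>2 \<partial>\<Omega>)" for t
  have gstar: "(\<integral>e. gf e \<theta>star \<partial>P) = 0"
  proof -
    have "(\<lambda>h. (\<integral>e. gf e \<theta>star \<partial>P) \<bullet> h) = (\<lambda>v. 0)"
      by (rule differential_zero_maxmin[of \<theta>star UNIV, OF _ _ interchange]) (use minimizer in auto)
    then have "(\<integral>e. gf e \<theta>star \<partial>P) \<bullet> (\<integral>e. gf e \<theta>star \<partial>P) = 0" by (metis)
    then show ?thesis by simp
  qed
  note os = one_step[OF P grad f_int gf_int c_int A3_int c_zero_mean gstar minimizer L_pos H_pos M_pos A1 A2 A3 \<eta>_pos \<eta>_le]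
  have \<rho>_nn: "0 \<le> \<rho>"
  proof -
    obtain b :: 'a where b: "b \<in> Basis" using nonempty_Basis by blast
    have "0 \<le> (\<integral>e. (norm ((\<theta>star + b) - \<eta> *\<^sub>R (gf e (\<theta>star + b) - c e (\<theta>star + b)) - \<theta>star))\<^sup>2 \<partial>P)"
      by (rule Bochner_Integration.integral_nonneg) simp
    also have "\<dots> \<le> \<rho> * (norm ((\<theta>star + b) - \<theta>star))\<^sup>2" using os[of "\<theta>star + b"] \<rho>_def by simp
    also have "\<dots> = \<rho>" using b by simp
    finally show ?thesis .
  qed
  have eps_meas: "eps i \<in> measurable \<Omega> P" for i
    using eps_indep unfolding \<Omega>.indep_vars_def by auto
  have gf2: "(\<lambda>p. gf (snd p) (fst p)) \<in> borel_measurable (borel \<Otimes>\<^sub>M P)"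
  proof -
    have "(\<lambda>p. (snd p, fst p)) \<in> measurable (borel \<Otimes>\<^sub>M P) (P \<Otimes>\<^sub>M borel)" by measurable
    from measurable_compose[OF this gf_meas] show ?thesis by simp
  qed
  have c2: "(\<lambda>p. c (snd p) (fst p)) \<in> borel_measurable (borel \<Otimes>\<^sub>M P)"
  proof -
    have "(\<lambda>p. (snd p, fst p)) \<in> measurable (borel \<Otimes>\<^sub>M P) (P \<Otimes>\<^sub>M borel)" by measurable
    from measurable_compose[OF this c_meas] show ?thesis by simp
  qed
  define \<psi> where "\<psi> p = (norm (fst p - \<eta> *\<^sub>R (gf (snd p) (fst p) - c (snd p) (fst p)) - \<theta>star))\<^sup>2" for p
  have \<psi>_meas: "\<psi> \<in> borel_measurable (borel \<Otimes>\<^sub>M P)"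
    unfolding \<psi>_def using gf2 c2 by measurable
  have step: "I (Suc t) \<le> \<rho> * I t" for t
  proof -
    define Q where "Q = PiM {..<Suc t} (\<lambda>_::nat. P)"
    define Z where "Z \<omega> = restrict (\<lambda>i. eps i \<omega>) {..<Suc t}" for \<omega>
    define Gt where "Gt z = sgd_cv_iter gf c \<eta> \<theta>0 (\<lambda>i (_::unit). z i) t ()" for z
    interpret PS: product_sigma_finite "\<lambda>_::nat. P"
      unfolding product_sigma_finite_def using P.sigma_finite_measure_axioms by simp
    have Gm: "Gt \<in> borel_measurable Q"
      unfolding Gt_def Q_def by (rule iter_meas[OF gf_meas c_meas]) simp
    have Gm': "Gt \<in> borel_measurable (PiM (insert t {..<t}) (\<lambda>_. P))"
      using Gm unfolding Q_def lessThan_Suc .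
    have Gupd: "Gt (x(t := y)) = Gt x" for x y
      unfolding Gt_def using iter_dep[of t "x(t := y)" "\<lambda>i _. x i" "()" gf c \<eta> \<theta>0] by simp
    have Zm: "Z \<in> measurable \<Omega> Q"
      unfolding Z_def Q_def using eps_meas by measurable
    have distrZ: "distr \<Omega> Q Z = Q"
    proof -
      have "\<Omega>.indep_vars (\<lambda>_. P) eps {..<Suc t}"
        by (rule \<Omega>.indep_vars_subset[OF eps_indep]) simp
      then have "distr \<Omega> (\<Pi>\<^sub>M i\<in>{..<Suc t}. P) (\<lambda>x. \<lambda>i\<in>{..<Suc t}. eps i x) = (\<Pi>\<^sub>M i\<in>{..<Suc t}. distr \<Omega> P (eps i))"
        using \<Omega>.indep_vars_iff_distr_eq_PiM[where I="{..<Suc t}" and M'="\<lambda>_. P" and X=eps] eps_meas by auto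
      then show ?thesis unfolding Q_def Z_def eps_law by simp
    qed
    have XZ: "X t \<omega> = Gt (Z \<omega>)" for \<omega>
      unfolding Gt_def Z_def X_def by (rule iter_dep[symmetric]) simp
    have eZ: "eps t \<omega> = Z \<omega> t" for \<omega> by (simp add: Z_def)
    define \<Phi> where "\<Phi> z = \<psi> (Gt z, z t)" for z
    have \<Phi>m: "\<Phi> \<in> borel_measurable Q"
    proof -
      have "(\<lambda>z. (Gt z, z t)) \<in> measurable Q (borel \<Otimes>\<^sub>M P)"
        unfolding Q_def using Gm[unfolded Q_def] by (intro measurable_Pair measurable_component_singleton) auto
      from measurable_compose[OF this \<psi>_meas] show ?thesis by (simp add: \<Phi>_def[abs_def])
    qed
    have \<Phi>m': "\<Phi> \<in> borel_measurable (PiM (insert t {..<t}) (\<lambda>_. P))"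
      using \<Phi>m unfolding Q_def lessThan_Suc .
    have XS: "(norm (X (Suc t) \<omega> - \<theta>star))\<^sup>2 = \<Phi> (Z \<omega>)" for \<omega>
      by (simp add: \<Phi>_def \<psi>_def Let_def XZ[symmetric] eZ[symmetric]) (simp add: X_def Let_def)
    have fXS: "(\<lambda>\<omega>. (norm (X (Suc t) \<omega> - \<theta>star))\<^sup>2) = (\<lambda>\<omega>. \<Phi> (Z \<omega>))" using XS by auto
    have intS: "integrable \<Omega> (\<lambda>\<omega>. \<Phi> (Z \<omega>))"
      using iter_int[of "Suc t"] by (simp only: fXS[symmetric] X_def)
    have "ennreal (I (Suc t)) = ennreal (\<integral>\<omega>. \<Phi> (Z \<omega>) \<partial>\<Omega>)"
      unfolding I_def fXS ..
    also have "\<dots> = (\<integral>\<^sup>+\<omega>. ennreal (\<Phi> (Z \<omega>)) \<partial>\<Omega>)"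
      using intS by (subst nn_integral_eq_integral) (auto simp: \<Phi>_def \<psi>_def)
    also have "\<dots> = (\<integral>\<^sup>+z. ennreal (\<Phi> z) \<partial>distr \<Omega> Q Z)"
      using Zm \<Phi>m by (subst nn_integral_distr) auto
    also have "\<dots> = (\<integral>\<^sup>+z. ennreal (\<Phi> z) \<partial>PiM (insert t {..<t}) (\<lambda>_. P))"
      by (simp only: distrZ) (simp add: Q_def lessThan_Suc)
    also have "\<dots> = (\<integral>\<^sup>+x. \<integral>\<^sup>+y. ennreal (\<Phi> (x(t := y))) \<partial>P \<partial>PiM {..<t} (\<lambda>_. P))"
      using \<Phi>m' by (subst PS.product_nn_integral_insert) auto
    also have "\<dots> \<le> (\<integral>\<^sup>+x. ennreal (\<rho> * (norm (Gt x - \<theta>star))\<^sup>2) \<partial>PiM {..<t} (\<lambda>_. P))"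
    proof (rule nn_integral_mono)
      fix x :: "nat \<Rightarrow> 'e"
      have "(\<integral>\<^sup>+y. ennreal (\<Phi> (x(t := y))) \<partial>P) = (\<integral>\<^sup>+e. ennreal (\<psi> (Gt x, e)) \<partial>P)"
        by (simp add: \<Phi>_def Gupd)
      also have "\<dots> = ennreal (\<integral>e. \<psi> (Gt x, e) \<partial>P)"
        using os[of "Gt x"] by (subst nn_integral_eq_integral) (auto simp: \<psi>_def)
      also have "\<dots> \<le> ennreal (\<rho> * (norm (Gt x - \<theta>star))\<^sup>2)"
        using os[of "Gt x"] by (intro ennreal_leI) (simp add: \<psi>_def \<rho>_def)
      finally show "(\<integral>\<^sup>+y. ennreal (\<Phi> (x(t := y))) \<partial>P) \<le> ennreal (\<rho> * (norm (Gt x - \<theta>star))\<^sup>2)" .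
    qed
    also have "\<dots> = (\<integral>\<^sup>+x. \<integral>\<^sup>+y. ennreal (\<rho> * (norm (Gt (x(t := y)) - \<theta>star))\<^sup>2) \<partial>P \<partial>PiM {..<t} (\<lambda>_. P))"
      by (simp add: Gupd P.emeasure_space_1)
    also have "\<dots> = (\<integral>\<^sup>+z. ennreal (\<rho> * (norm (Gt z - \<theta>star))\<^sup>2) \<partial>PiM (insert t {..<t}) (\<lambda>_. P))"
      using Gm' by (subst PS.product_nn_integral_insert) auto
    also have "\<dots> = (\<integral>\<^sup>+z. ennreal (\<rho> * (norm (Gt z - \<theta>star))\<^sup>2) \<partial>distr \<Omega> Q Z)"
      by (simp only: distrZ) (simp add: Q_def lessThan_Suc)
    also have "\<dots> = (\<integral>\<^sup>+\<omega>. ennreal (\<rho> * (norm (X t \<omega> - \<theta>star))\<^sup>2) \<partial>\<Omega>)"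
      using Zm Gm by (subst nn_integral_distr) (auto simp: XZ)
    also have "\<dots> = ennreal (\<integral>\<omega>. \<rho> * (norm (X t \<omega> - \<theta>star))\<^sup>2 \<partial>\<Omega>)"
    proof (rule nn_integral_eq_integral)
      have "integrable \<Omega> (\<lambda>\<omega>. (norm (X t \<omega> - \<theta>star))\<^sup>2)"
        using iter_int[of t] by (simp only: X_def)
      then show "integrable \<Omega> (\<lambda>\<omega>. \<rho> * (norm (X t \<omega> - \<theta>star))\<^sup>2)" by simp
      show "AE \<omega> in \<Omega>. 0 \<le> \<rho> * (norm (X t \<omega> - \<theta>star))\<^sup>2" using \<rho>_nn by simp
    qed
    also have "\<dots> = ennreal (\<rho> * I t)" unfolding I_def by simp
    finally have "ennreal (I (Suc t)) \<le> ennreal (\<rho> * I t)" .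
    moreover have "0 \<le> I t" unfolding I_def by (rule Bochner_Integration.integral_nonneg) simp
    ultimately show ?thesis using \<rho>_nn by (simp add: ennreal_le_iff)
  qed
  have "I t \<le> \<rho> ^ t * (norm (\<theta>0 - \<theta>star))\<^sup>2"
  proof (induction t)
    case 0 then show ?case by (simp add: I_def X_def \<Omega>.prob_space)
  next
    case (Suc t)
    have "I (Suc t) \<le> \<rho> * I t" by (rule step)
    also have "\<dots> \<le> \<rho> * (\<rho> ^ t * (norm (\<theta>0 - \<theta>star))\<^sup>2)" using Suc \<rho>_nn by (rule mult_left_mono)
    finally show ?case by simp
  qed
  then show ?thesis by (simp add: I_def X_def)
qed

end
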